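(* Let $A$ be the upper triangular $N\times N$ complex matrix with entries $A_{ii}=\lambda_i(\lambda_i-1)$, $A_{ij}=-2\lambda_i$ for $i<j$, and $A_{ij}=0$ for $i>j$. Then for every $m\geq0$ and every $i\in\{1,\dots,N\}$, $$C^{(2m+1)}_{ii}\cdot v=\Big(\sum_{j=1}^N (A^m)_{ij}\,\lambda_j\Big)\, v.$$
   Context: Let $N\geq1$, $I=\{-N,\dots,-1,1,\dots,N\}$, and for $k\in I$ put $\bar k=0$ if $k>0$, $\bar k=1$ if $k<0$. The Lie superalgebra $\mathfrak{q}(N)$ over $\mathbb{C}$ is spanned by elements $F_{ij}$ ($i,j\in I$) with $F_{-i,-j}=F_{ij}$ (realized as $F_{ij}=E_{ij}+E_{-i,-j}\in\mathfrak{gl}(N|N)$), $F_{ij}$ of parity $\bar\imath+\bar\jmath\bmod 2$, and supercommutator $$[F_{ij}, F_{kl}] = \delta_{kj} F_{il} - (-1)^{(\bar{\imath}+ \bar{\jmath})(\bar{k} + \bar{l})} \delta_{il} F_{kj} + \delta_{k,-j} F_{-i,l} - (-1)^{(\bar{\imath} + \bar{\jmath})(\bar{k} + \bar{l})} \delta_{-i,l} F_{k,-j}.$$ For $n\geq1$ define $C^{(n)}_{ij}\in U(\mathfrak{q}(N))$ by $$C^{(n)}_{ij} = \sum_{k_1,\ldots,k_{n-1}\in I}F_{ik_1} (-1)^{\bar{k}_1} F_{k_1k_2} (-1)^{\bar{k}_2} \cdots F_{k_{n-2}k_{n-1}} (-1)^{\bar{k}_{n-1}} F_{k_{n-1}j}$$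 (so $C^{(1)}_{ij}=F_{ij}$). Let $V$ be a representation of $\mathfrak{q}(N)$ and $v\in V$ a vector such that $F_{ij}\cdot v=0$ whenever $|i|<|j|$, and $F_{ii}\cdot v=\lambda_i v$ for $i=1,\dots,N$, where $\lambda_1,\dots,\lambda_N\in\mathbb{C}$. *)

theory Defs
  imports Main "HOL.Complex" "Jordan_Normal_Form.Matrix"
begin

definition qI :: "nat \<Rightarrow> int set" where
  "qI N = {- int N .. -1} \<union> {1 .. int N}"

definition pbar :: "int \<Rightarrow> nat" where
  "pbar k = (if k < 0 then 1 else 0)"

definition sgnI :: "int \<Rightarrow> complex" where
  "sgnI k = (-1) ^ pbar k"

text \<open>rho i j is the operator by which F_ij acts on V (a complex vector space,
  given as an abelian group with scalar multiplication smul).\<close>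
definition is_qN_rep ::
  "nat \<Rightarrow> (complex \<Rightarrow> 'v::ab_group_add \<Rightarrow> 'v) \<Rightarrow> (int \<Rightarrow> int \<Rightarrow> 'v \<Rightarrow> 'v) \<Rightarrow> bool" where
  "is_qN_rep N smul rho \<longleftrightarrow>
     vector_space smul \<and>
     (\<forall>i\<in>qI N. \<forall>j\<in>qI N. Vector_Spaces.linear smul smul (rho i j)) \<and>
     (\<forall>i\<in>qI N. \<forall>j\<in>qI N. rho (-i) (-j) = rho i j) \<and>
     (\<forall>i\<in>qI N. \<forall>j\<in>qI N. \<forall>k\<in>qI N. \<forall>l\<in>qI N. \<forall>w.
        let s = ((-1::complex) ^ ((pbar i + pbar j) * (pbar k + pbar l))) in
        rho i j (rho k l w) - smul s (rho k l (rho i j w)) =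
          (if k = j then rho i l w else 0)
          - smul s (if i = l then rho k j w else 0)
          + (if k = - j then rho (- i) l w else 0)
          - smul s (if - i = l then rho k (- j) w else 0))"

fun Cact ::
  "nat \<Rightarrow> (complex \<Rightarrow> 'v::ab_group_add \<Rightarrow> 'v) \<Rightarrow> (int \<Rightarrow> int \<Rightarrow> 'v \<Rightarrow> 'v)
     \<Rightarrow> nat \<Rightarrow> int \<Rightarrow> int \<Rightarrow> 'v \<Rightarrow> 'v" where
  "Cact N smul rho 0 i j w = 0"
| "Cact N smul rho (Suc 0) i j w = rho i j w"
| "Cact N smul rho (Suc (Suc n)) i j w =
     (\<Sum>k\<in>qI N. rho i k (smul (sgnI k) (Cact N smul rho (Suc n) k j w)))"

text \<open>The upper triangular N x N matrix A (0-based JNF indices: entry (i-1,j-1)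
  of the matrix is A_{ij} of the paper).\<close>
definition Amat :: "nat \<Rightarrow> (int \<Rightarrow> complex) \<Rightarrow> complex mat" where
  "Amat N lam = mat N N (\<lambda>(a, b).
      let i = int a + 1; j = int b + 1 in
      if i = j then lam i * (lam i - 1) else if i < j then -2 * lam i else 0)"

end

theory Submission
  imports Defs
begin

definition sg :: "int \<Rightarrow> int \<Rightarrow> int \<Rightarrow> int \<Rightarrow> complex" where
  "sg i j k l = (-1::complex) ^ ((pbar i + pbar j) * (pbar k + pbar l))"

lemma qI_nz: "k \<in> qI N \<Longrightarrow> k \<noteq> 0" by (auto simp: qI_def)
lemma qI_neg: "k \<in> qI N \<Longrightarrow> -k \<in> qI N" by (auto simp: qI_def)
lemma finite_qI[simp]: "finite (qI N)" by (simp add: qI_def)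

lemma sgnI_alt: "sgnI k = (if k < 0 then -1 else 1)" by (simp add: sgnI_def pbar_def)

lemma sg_mult: "sg i j k m * sg i j m l = sg i j k l"
  unfolding sg_def pbar_def by (auto simp: algebra_simps)

lemma sg_sq: "sg i j k l * sg i j k l = 1"
  unfolding sg_def pbar_def by auto

lemma sg_b: "sgnI j * sg i j k j = sgnI i * sg i j k i"
  unfolding sg_def sgnI_alt pbar_def by auto

lemma sg_c: "i \<noteq> 0 \<Longrightarrow> j \<noteq> 0 \<Longrightarrow> sgnI (-j) * sg i j k (-j) = sgnI (-i) * sg i j k (-i)"
  unfolding sg_def sgnI_alt pbar_def by auto

lemma sum_qI: "(\<Sum>k\<in>qI N. f k) = (\<Sum>p\<in>{1..N}. f (int p) + f (- int p))"
proof -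
  have e: "qI N = int ` {1..N} \<union> (\<lambda>p. - int p) ` {1..N}"
    unfolding qI_def
  proof (intro equalityI subsetI)
    fix x assume "x \<in> {- int N..-1} \<union> {1..int N}"
    then show "x \<in> int ` {1..N} \<union> (\<lambda>p. - int p) ` {1..N}"
    proof
      assume "x \<in> {- int N..-1}"
      then have "x = - int (nat (-x))" "nat (-x) \<in> {1..N}" by auto
      then show ?thesis by blast
    next
      assume "x \<in> {1..int N}"
      then have "x = int (nat x)" "nat x \<in> {1..N}" by auto
      then show ?thesis by blast
    qed
  qed auto
  have d: "int ` {1..N} \<inter> (\<lambda>p. - int p) ` {1..N} = {}" by auto
  have "(\<Sum>k\<in>qI N. f k) = (\<Sum>k\<in>int ` {1..N}. f k) + (\<Sum>k\<in>(\<lambda>p. - int p) ` {1..N}. f k)"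
    unfolding e by (rule sum.union_disjoint) (use d in auto)
  also have "\<dots> = (\<Sum>p\<in>{1..N}. f (int p)) + (\<Sum>p\<in>{1..N}. f (- int p))"
    by (subst sum.reindex, simp add: inj_on_def)+ simp
  finally show ?thesis by (simp add: sum.distrib)
qed

fun bs :: "nat \<Rightarrow> (int \<Rightarrow> complex) \<Rightarrow> nat \<Rightarrow> nat \<Rightarrow> complex" where
  "bs N lam 0 l = 1"
| "bs N lam (Suc m) l = lam (int l) * (lam (int l) - 1) * bs N lam m l - 2 * (\<Sum>p\<in>{l<..N}. lam (int p) * bs N lam m p)"

locale qrep = vector_space smul for smul :: "complex \<Rightarrow> 'v::ab_group_add \<Rightarrow> 'v" +
  fixes N :: nat and rho :: "int \<Rightarrow> int \<Rightarrow> 'v \<Rightarrow> 'v"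
  assumes radd: "i \<in> qI N \<Longrightarrow> j \<in> qI N \<Longrightarrow> rho i j (x + y) = rho i j x + rho i j y"
    and rscale: "i \<in> qI N \<Longrightarrow> j \<in> qI N \<Longrightarrow> rho i j (smul c x) = smul c (rho i j x)"
    and rsym: "i \<in> qI N \<Longrightarrow> j \<in> qI N \<Longrightarrow> rho (-i) (-j) = rho i j"
    and rcomm: "i \<in> qI N \<Longrightarrow> j \<in> qI N \<Longrightarrow> k \<in> qI N \<Longrightarrow> l \<in> qI N \<Longrightarrow>
      rho i j (rho k l w) - smul (sg i j k l) (rho k l (rho i j w)) =
          (if k = j then rho i l w else 0)
          - smul (sg i j k l) (if i = l then rho k j w else 0)
          + (if k = - j then rho (- i) l w else 0)
          - smul (sg i j k l) (if - i = l then rho k (- j) w else 0)"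
begin

abbreviation C where "C \<equiv> Cact N smul rho"

lemma rho_add_gen: "i \<in> qI N \<Longrightarrow> j \<in> qI N \<Longrightarrow> additive (rho i j)"
  by standard (rule radd)

lemma rho_zero[simp]: "i \<in> qI N \<Longrightarrow> j \<in> qI N \<Longrightarrow> rho i j 0 = 0"
  using additive.zero[OF rho_add_gen] .
lemma rho_diff: "i \<in> qI N \<Longrightarrow> j \<in> qI N \<Longrightarrow> rho i j (x - y) = rho i j x - rho i j y"
  using additive.diff[OF rho_add_gen] .
lemma rho_minus: "i \<in> qI N \<Longrightarrow> j \<in> qI N \<Longrightarrow> rho i j (- x) = - rho i j x"
  using additive.minus[OF rho_add_gen] .
lemma rho_sum: "i \<in> qI N \<Longrightarrow> j \<in> qI N \<Longrightarrow> rho i j (sum g A) = (\<Sum>x\<in>A. rho i j (g x))"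
  using additive.sum[OF rho_add_gen] .

lemma C_lin_Suc: "j \<in> qI N \<Longrightarrow> i \<in> qI N \<Longrightarrow> C (Suc n) i j (x + y) = C (Suc n) i j x + C (Suc n) i j y \<and> C (Suc n) i j (smul c x) = smul c (C (Suc n) i j x)"
proof (induction n arbitrary: i x y c)
  case 0
  then show ?case by (simp add: radd rscale)
next
  case (Suc n)
  have "C (Suc (Suc n)) i j (x + y) = (\<Sum>k\<in>qI N. rho i k (smul (sgnI k) (C (Suc n) k j x)) + rho i k (smul (sgnI k) (C (Suc n) k j y)))"
    using Suc by (auto intro!: sum.cong simp: radd scale_right_distrib)
  moreover have "C (Suc (Suc n)) i j (smul c x) = (\<Sum>k\<in>qI N. smul c (rho i k (smul (sgnI k) (C (Suc n) k j x))))"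
    using Suc by (auto intro!: sum.cong simp: rscale scale_left_commute[of c])
  ultimately show ?case by (simp add: sum.distrib scale_sum_right)
qed

lemma C_add: "j \<in> qI N \<Longrightarrow> i \<in> qI N \<Longrightarrow> C n i j (x + y) = C n i j x + C n i j y"
  using C_lin_Suc by (cases n) auto
lemma C_scale: "j \<in> qI N \<Longrightarrow> i \<in> qI N \<Longrightarrow> C n i j (smul c x) = smul c (C n i j x)"
  using C_lin_Suc by (cases n) auto
lemma C_add_gen: "i \<in> qI N \<Longrightarrow> j \<in> qI N \<Longrightarrow> additive (C n i j)"
  by standard (rule C_add)
lemma C_zero[simp]: "i \<in> qI N \<Longrightarrow> j \<in> qI N \<Longrightarrow> C n i j 0 = 0"
  using additive.zero[OF C_add_gen] .
lemma C_diff: "i \<in> qI N \<Longrightarrow> j \<in> qI N \<Longrightarrow> C n i j (x - y) = C n i j x - C n i j y"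
  using additive.diff[OF C_add_gen] .
lemma C_minus: "i \<in> qI N \<Longrightarrow> j \<in> qI N \<Longrightarrow> C n i j (- x) = - C n i j x"
  using additive.minus[OF C_add_gen] .
lemma C_sum: "i \<in> qI N \<Longrightarrow> j \<in> qI N \<Longrightarrow> C n i j (sum g A) = (\<Sum>x\<in>A. C n i j (g x))"
  using additive.sum[OF C_add_gen] .


lemma comm_C_Suc:
  assumes "i \<in> qI N" "j \<in> qI N" "k \<in> qI N" "l \<in> qI N"
  shows "rho i j (C (Suc n) k l w) - smul (sg i j k l) (C (Suc n) k l (rho i j w)) =
   (if k = j then C (Suc n) i l w else 0) - smul (sg i j k l) (if i = l then C (Suc n) k j w else 0)
   + (if k = -j then C (Suc n) (-i) l w else 0) - smul (sg i j k l) (if -i = l then C (Suc n) k (-j) w else 0)"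
  using assms
proof (induction n arbitrary: i j k l w)
  case 0
  then show ?case by (simp add: rcomm)
next
  case (Suc n)
  note IH = Suc.IH
  have i: "i \<in> qI N" and j: "j \<in> qI N" and k: "k \<in> qI N" and l: "l \<in> qI N" using Suc.prems by auto
  have ni: "-i \<in> qI N" and nj: "-j \<in> qI N" using i j qI_neg by auto
  define C' where "C' = C (Suc n)"
  define \<sigma> where "\<sigma> = sg i j k l"
  define x where "x m = smul (sgnI m) (C' m l w)" for m
  define X where "X = smul (sgnI i * sg i j k i) (rho k j (C' i l w))"
  define Y where "Y = smul (sgnI (-i) * sg i j k (-i)) (rho k (-j) (C' (-i) l w))"
  define T where "T m = rho i j (rho k m (x m)) - smul \<sigma> (rho k m (smul (sgnI m) (C' m l (rho i j w))))" for m
  define R where "R m = (if k = j then rho i m (x m) else 0) + (if k = -j then rho (-i) m (x m) else 0)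
     - (if i = l then smul \<sigma> (rho k m (smul (sgnI m) (C' m j w))) else 0)
     - (if -i = l then smul \<sigma> (rho k m (smul (sgnI m) (C' m (-j) w))) else 0)
     + ((if m = j then X else 0) - (if m = i then X else 0))
     + ((if m = -j then Y else 0) - (if m = -i then Y else 0))" for m
  have TR: "T m = R m" if m: "m \<in> qI N" for m
  proof -
    define \<sigma>1 where "\<sigma>1 = sg i j k m"
    define \<sigma>2 where "\<sigma>2 = sg i j m l"
    define Comm1 where "Comm1 = (if k = j then rho i m (x m) else 0)
          - smul \<sigma>1 (if i = m then rho k j (x m) else 0)
          + (if k = - j then rho (- i) m (x m) else 0)
          - smul \<sigma>1 (if - i = m then rho k (- j) (x m) else 0)"
    define Comm2 where "Comm2 = (if m = j then C' i l w else 0) - smul \<sigma>2 (if i = l then C' m j w else 0)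
   + (if m = -j then C' (-i) l w else 0) - smul \<sigma>2 (if -i = l then C' m (-j) w else 0)"
    have h1: "rho i j (rho k m (x m)) = smul \<sigma>1 (rho k m (rho i j (x m))) + Comm1"
      using rcomm[OF i j k m, of "x m"] unfolding \<sigma>1_def Comm1_def by (simp add: algebra_simps)
    have h2: "rho i j (x m) = smul (sgnI m * \<sigma>2) (C' m l (rho i j w)) + smul (sgnI m) Comm2"
    proof -
      have "rho i j (C' m l w) - smul \<sigma>2 (C' m l (rho i j w)) = Comm2"
        using IH[OF i j m l, of w] unfolding \<sigma>2_def Comm2_def C'_def by simp
      then have "rho i j (C' m l w) = smul \<sigma>2 (C' m l (rho i j w)) + Comm2"
        by (simp add: algebra_simps)
      then show ?thesis unfolding x_def by (simp add: rscale[OF i j] scale_right_distrib)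
    qed
    have s12: "\<sigma>1 * (sgnI m * \<sigma>2) = sgnI m * \<sigma>"
      using sg_mult[of i j k m l] unfolding \<sigma>1_def \<sigma>2_def \<sigma>_def by (simp add: algebra_simps)
    have h3: "T m = Comm1 + smul (\<sigma>1 * sgnI m) (rho k m Comm2)"
    proof -
      have c: "\<sigma>1 * (sgnI m * \<sigma>2) = \<sigma> * sgnI m" using s12 by (simp add: mult.commute)
      show ?thesis
        unfolding T_def h1 h2 by (simp add: radd[OF k m] rscale[OF k m] scale_right_distrib c)
    qed
    have pa: "smul (\<sigma>1 * sgnI m) (rho k m (if m = j then C' i l w else 0)) - smul \<sigma>1 (if i = m then rho k j (x m) else 0)
       = (if m = j then X else 0) - (if m = i then X else 0)"
      using sg_b[of j i k] unfolding X_def \<sigma>1_def x_def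
      by (cases "m = j"; cases "m = i") (auto simp: rscale[OF k j] rho_zero[OF k m] rho_zero[OF k i] rho_zero[OF k ni] mult.commute)
    have pb: "smul (\<sigma>1 * sgnI m) (rho k m (if m = -j then C' (-i) l w else 0)) - smul \<sigma>1 (if -i = m then rho k (-j) (x m) else 0)
       = (if m = -j then Y else 0) - (if m = -i then Y else 0)"
      using sg_c[of i j k] qI_nz[OF i] qI_nz[OF j] unfolding Y_def \<sigma>1_def x_def
      by (cases "m = -j"; cases "m = -i") (auto simp: rscale[OF k nj] rho_zero[OF k m] rho_zero[OF k i] rho_zero[OF k ni] mult.commute)
    have pc: "smul (\<sigma>1 * sgnI m) (rho k m (smul \<sigma>2 (if i = l then C' m j w else 0)))
       = (if i = l then smul \<sigma> (rho k m (smul (sgnI m) (C' m j w))) else 0)"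
      using s12 by (cases "i = l") (auto simp: rscale[OF k m] rho_zero[OF k m] mult.commute mult.left_commute)
    have pd: "smul (\<sigma>1 * sgnI m) (rho k m (smul \<sigma>2 (if -i = l then C' m (-j) w else 0)))
       = (if -i = l then smul \<sigma> (rho k m (smul (sgnI m) (C' m (-j) w))) else 0)"
      using s12 by (cases "-i = l") (auto simp: rscale[OF k m] rho_zero[OF k m] mult.commute mult.left_commute)
    have "T m = Comm1 + smul (\<sigma>1 * sgnI m) (rho k m (if m = j then C' i l w else 0))
      - smul (\<sigma>1 * sgnI m) (rho k m (smul \<sigma>2 (if i = l then C' m j w else 0)))
      + smul (\<sigma>1 * sgnI m) (rho k m (if m = -j then C' (-i) l w else 0))
      - smul (\<sigma>1 * sgnI m) (rho k m (smul \<sigma>2 (if -i = l then C' m (-j) w else 0)))"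
      unfolding h3 Comm2_def by (simp add: radd[OF k m] rho_diff[OF k m] scale_right_distrib scale_right_diff_distrib)
    also have "\<dots> = R m"
      unfolding R_def Comm1_def pc[symmetric] pd[symmetric] pa[symmetric] pb[symmetric]
      by (simp add: algebra_simps)
    finally show ?thesis .
  qed
  have "rho i j (C (Suc (Suc n)) k l w) - smul \<sigma> (C (Suc (Suc n)) k l (rho i j w)) = (\<Sum>m\<in>qI N. T m)"
    unfolding T_def x_def C'_def
    by (simp add: rho_sum[OF i j] scale_sum_right sum_subtractf)
  also have "\<dots> = (\<Sum>m\<in>qI N. R m)" using TR by (rule sum.cong[OF refl])
  also have "\<dots> = (if k = j then C (Suc (Suc n)) i l w else 0) - smul \<sigma> (if i = l then C (Suc (Suc n)) k j w else 0)
   + (if k = -j then C (Suc (Suc n)) (-i) l w else 0) - smul \<sigma> (if -i = l then C (Suc (Suc n)) k (-j) w else 0)"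
  proof -
    have s1: "(\<Sum>m\<in>qI N. (if k = j then rho i m (x m) else 0)) = (if k = j then C (Suc (Suc n)) i l w else 0)"
      by (cases "k = j") (simp_all add: x_def C'_def)
    have s2: "(\<Sum>m\<in>qI N. (if k = -j then rho (-i) m (x m) else 0)) = (if k = -j then C (Suc (Suc n)) (-i) l w else 0)"
      by (cases "k = -j") (simp_all add: x_def C'_def)
    have s3: "(\<Sum>m\<in>qI N. (if i = l then smul \<sigma> (rho k m (smul (sgnI m) (C' m j w))) else 0)) = smul \<sigma> (if i = l then C (Suc (Suc n)) k j w else 0)"
      by (cases "i = l") (simp_all add: C'_def scale_sum_right)
    have s4: "(\<Sum>m\<in>qI N. (if -i = l then smul \<sigma> (rho k m (smul (sgnI m) (C' m (-j) w))) else 0)) = smul \<sigma> (if -i = l then C (Suc (Suc n)) k (-j) w else 0)"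
      by (cases "-i = l") (simp_all add: C'_def scale_sum_right)
    have s5: "(\<Sum>m\<in>qI N. ((if m = j then X else 0) - (if m = i then X else 0))) = 0"
      using i j by (simp add: sum_subtractf)
    have s6: "(\<Sum>m\<in>qI N. ((if m = -j then Y else 0) - (if m = -i then Y else 0))) = 0"
      using ni nj by (simp add: sum_subtractf)
    show ?thesis unfolding R_def
      using i j ni nj by (simp only: sum.distrib sum_subtractf s1 s2 s3 s4 s5 s6) simp
  qed
  finally show ?case unfolding \<sigma>_def .
qed

lemma comm_C:
  assumes "i \<in> qI N" "j \<in> qI N" "k \<in> qI N" "l \<in> qI N"
  shows "rho i j (C n k l w) - smul (sg i j k l) (C n k l (rho i j w)) =
   (if k = j then C n i l w else 0) - smul (sg i j k l) (if i = l then C n k j w else 0)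
   + (if k = -j then C n (-i) l w else 0) - smul (sg i j k l) (if -i = l then C n k (-j) w else 0)"
  using comm_C_Suc[OF assms] assms by (cases n) auto


lemma sum_qI_neg: "(\<Sum>k\<in>qI N. f k) = (\<Sum>k\<in>qI N. f (- k))"
  by (simp add: sum_qI add.commute)

lemma sym_C_Suc: "i \<in> qI N \<Longrightarrow> j \<in> qI N \<Longrightarrow> C (Suc n) (-i) (-j) w = smul ((-1)^n) (C (Suc n) i j w)"
proof (induction n arbitrary: i)
  case 0
  then show ?case by (simp add: rsym)
next
  case (Suc n)
  have "C (Suc (Suc n)) (-i) (-j) w = (\<Sum>k\<in>qI N. rho (-i) (-k) (smul (sgnI (-k)) (C (Suc n) (-k) (-j) w)))"
    by (simp only: Cact.simps) (rule sum_qI_neg)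
  also have "\<dots> = (\<Sum>k\<in>qI N. smul ((-1)^Suc n) (rho i k (smul (sgnI k) (C (Suc n) k j w))))"
  proof (rule sum.cong[OF refl])
    fix k assume k: "k \<in> qI N"
    have "sgnI (-k) = - sgnI k" using qI_nz[OF k] by (simp add: sgnI_alt)
    then show "rho (-i) (-k) (smul (sgnI (-k)) (C (Suc n) (-k) (-j) w)) = smul ((-1)^Suc n) (rho i k (smul (sgnI k) (C (Suc n) k j w)))"
      using Suc k by (simp add: rsym rscale rho_minus mult.commute)
  qed
  finally show ?case by (simp add: scale_sum_right)
qed

lemma sym_C: "i \<in> qI N \<Longrightarrow> j \<in> qI N \<Longrightarrow> C n (-i) (-j) w = smul ((-1)^(n - 1)) (C n i j w)"
  using sym_C_Suc by (cases n) auto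

lemma right_rec: "k \<in> qI N \<Longrightarrow> l \<in> qI N \<Longrightarrow>
  C (Suc (Suc n)) k l w = (\<Sum>m\<in>qI N. C (Suc n) k m (smul (sgnI m) (rho m l w)))"
proof (induction n arbitrary: k)
  case 0
  then show ?case by simp
next
  case (Suc n)
  have "C (Suc (Suc (Suc n))) k l w = (\<Sum>a\<in>qI N. rho k a (smul (sgnI a) (\<Sum>m\<in>qI N. C (Suc n) a m (smul (sgnI m) (rho m l w)))))"
    using Suc by (simp only: Cact.simps) (auto intro!: sum.cong)
  also have "\<dots> = (\<Sum>a\<in>qI N. \<Sum>m\<in>qI N. rho k a (smul (sgnI a) (C (Suc n) a m (smul (sgnI m) (rho m l w)))))"
    using Suc by (auto intro!: sum.cong simp: scale_sum_right rho_sum)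
  also have "\<dots> = (\<Sum>m\<in>qI N. \<Sum>a\<in>qI N. rho k a (smul (sgnI a) (C (Suc n) a m (smul (sgnI m) (rho m l w)))))"
    by (rule sum.swap)
  also have "\<dots> = (\<Sum>m\<in>qI N. C (Suc (Suc n)) k m (smul (sgnI m) (rho m l w)))"
    by simp
  finally show ?case .
qed

end

locale qsing = qrep +
  fixes v and lam :: "int \<Rightarrow> complex"
  assumes hz: "\<And>i j. i \<in> qI N \<Longrightarrow> j \<in> qI N \<Longrightarrow> \<bar>i\<bar> < \<bar>j\<bar> \<Longrightarrow> rho i j v = 0"
    and hd: "\<And>i. i \<in> {1 .. int N} \<Longrightarrow> rho i i v = smul (lam i) v"
begin

lemma sg_nz: "sg i j k l \<noteq> 0" unfolding sg_def by simp

lemma zero_C_Suc: "k \<in> qI N \<Longrightarrow> l \<in> qI N \<Longrightarrow> \<bar>k\<bar> < \<bar>l\<bar> \<Longrightarrow> C (Suc n) k l v = 0"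
proof (induction n arbitrary: k l)
  case 0
  then show ?case by (simp add: hz)
next
  case (Suc n)
  have "C (Suc (Suc n)) k l v = (\<Sum>m\<in>qI N. C (Suc n) k m (smul (sgnI m) (rho m l v)))"
    by (rule right_rec[OF Suc.prems(1,2)])
  also have "\<dots> = (\<Sum>m\<in>qI N. 0)"
  proof (rule sum.cong[OF refl])
    fix m assume m: "m \<in> qI N"
    show "C (Suc n) k m (smul (sgnI m) (rho m l v)) = 0"
    proof (cases "\<bar>m\<bar> < \<bar>l\<bar>")
      case True
      then show ?thesis using hz[OF m Suc.prems(2) True] m Suc.prems by simp
    next
      case False
      have km: "\<bar>k\<bar> < \<bar>m\<bar>" using False Suc.prems by linarith
      have "rho m l (C (Suc n) k m v) - smul (sg m l k m) (C (Suc n) k m (rho m l v)) =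
        (if k = l then C (Suc n) m m v else 0) - smul (sg m l k m) (if m = m then C (Suc n) k l v else 0)
        + (if k = -l then C (Suc n) (-m) m v else 0) - smul (sg m l k m) (if -m = m then C (Suc n) k (-l) v else 0)"
        by (rule comm_C) (use m Suc.prems in auto)
      moreover have "k \<noteq> l" "k \<noteq> -l" "-m \<noteq> m" using Suc.prems qI_nz[OF m] by auto
      moreover have "C (Suc n) k m v = 0" using Suc.IH[OF Suc.prems(1) m km] .
      moreover have "C (Suc n) k l v = 0" using Suc.IH[OF Suc.prems] .
      ultimately have "smul (sg m l k m) (C (Suc n) k m (rho m l v)) = 0"
        using m Suc.prems by simp
      then show ?thesis using sg_nz m Suc.prems by (simp add: C_scale)
    qed
  qed
  finally show ?case by simp
qed

lemma zero_C: "k \<in> qI N \<Longrightarrow> l \<in> qI N \<Longrightarrow> \<bar>k\<bar> < \<bar>l\<bar> \<Longrightarrow> C n k l v = 0"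
  using zero_C_Suc by (cases n) auto


lemma mem_p: "p \<in> {1..N} \<Longrightarrow> int p \<in> qI N" "p \<in> {1..N} \<Longrightarrow> - int p \<in> qI N"
  by (auto simp: qI_def)

lemma sg_inv: "smul (sg i j k l) (smul (sg i j k l) x) = x"
  using sg_sq[of i j k l] by simp

lemma hlp1:
  assumes L: "L \<in> qI N" and q: "q \<in> qI N" and lt: "\<bar>L\<bar> < \<bar>q\<bar>"
  shows "C n L q (rho q L v) = C n L L v - smul (sg q L L q) (C n q q v)"
proof -
  have "rho q L (C n L q v) - smul (sg q L L q) (C n L q (rho q L v)) =
        (if L = L then C n q q v else 0) - smul (sg q L L q) (if q = q then C n L L v else 0)
        + (if L = -L then C n (-q) q v else 0) - smul (sg q L L q) (if -q = q then C n L (-L) v else 0)"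
    by (rule comm_C[OF q L L q])
  moreover have "L \<noteq> -L" "-q \<noteq> q" using qI_nz[OF L] qI_nz[OF q] by auto
  moreover have "C n L q v = 0" by (rule zero_C[OF L q lt])
  ultimately have "smul (sg q L L q) (C n L q (rho q L v)) = smul (sg q L L q) (C n L L v) - C n q q v"
    using q L by (simp add: algebra_simps)
  then have "smul (sg q L L q) (smul (sg q L L q) (C n L q (rho q L v))) = smul (sg q L L q) (smul (sg q L L q) (C n L L v) - C n q q v)"
    by simp
  then show ?thesis by (simp only: sg_inv scale_right_diff_distrib)
qed

lemma hlp2:
  assumes L: "L \<in> qI N" and q: "q \<in> qI N" and lt: "\<bar>L\<bar> < \<bar>q\<bar>"
  shows "C n L q (rho q (-L) v) = C n L (-L) v - smul (sg q (-L) L q) (C n (-q) q v)"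
proof -
  have nL: "-L \<in> qI N" using qI_neg[OF L] .
  have "rho q (-L) (C n L q v) - smul (sg q (-L) L q) (C n L q (rho q (-L) v)) =
        (if L = -L then C n q q v else 0) - smul (sg q (-L) L q) (if q = q then C n L (-L) v else 0)
        + (if L = - (-L) then C n (-q) q v else 0) - smul (sg q (-L) L q) (if -q = q then C n L (- (-L)) v else 0)"
    by (rule comm_C[OF q nL L q])
  moreover have "L \<noteq> -L" "-q \<noteq> q" using qI_nz[OF L] qI_nz[OF q] by auto
  moreover have "C n L q v = 0" by (rule zero_C[OF L q lt])
  ultimately have "smul (sg q (-L) L q) (C n L q (rho q (-L) v)) = smul (sg q (-L) L q) (C n L (-L) v) - C n (-q) q v"
    using q L nL by (simp add: algebra_simps)
  then have "smul (sg q (-L) L q) (smul (sg q (-L) L q) (C n L q (rho q (-L) v))) = smul (sg q (-L) L q) (smul (sg q (-L) L q) (C n L (-L) v) - C n (-q) q v)"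
    by simp
  then show ?thesis by (simp only: sg_inv scale_right_diff_distrib)
qed

lemma sum_split_l:
  assumes l: "l \<in> {1..N}" and f: "\<And>p. p \<in> {1..N} \<Longrightarrow> f p = (if p = l then A else 0) + (if l < p then B p else 0)"
  shows "(\<Sum>p\<in>{1..N}. f p) = A + (\<Sum>p\<in>{l<..N}. B p)"
proof -
  have "(\<Sum>p\<in>{1..N}. f p) = (\<Sum>p\<in>{1..N}. (if p = l then A else 0)) + (\<Sum>p\<in>{1..N}. (if l < p then B p else 0))"
    using f by (simp add: sum.distrib)
  also have "(\<Sum>p\<in>{1..N}. (if p = l then A else 0)) = A" using l by simp
  also have "(\<Sum>p\<in>{1..N}. (if l < p then B p else 0)) = (\<Sum>p\<in>{p\<in>{1..N}. l < p}. B p)"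
    using sum.inter_filter[of "{1..N}" B "\<lambda>p. l < p"] by simp
  also have "{p\<in>{1..N}. l < p} = {l<..N}" by auto
  finally show ?thesis .
qed

lemma R1:
  assumes l: "l \<in> {1..N}"
  shows "C (Suc (Suc n)) (int l) (int l) v = smul (lam (int l)) (C (Suc n) (int l) (int l) v)
     - C (Suc n) (int l) (- int l) (rho (- int l) (int l) v)
     - (\<Sum>p\<in>{l<..N}. C (Suc n) (int p) (int p) v + C (Suc n) (- int p) (- int p) v)"
proof -
  have L: "int l \<in> qI N" and nL: "- int l \<in> qI N" using mem_p[OF l] by auto
  have "C (Suc (Suc n)) (int l) (int l) v = (\<Sum>m\<in>qI N. C (Suc n) (int l) m (smul (sgnI m) (rho m (int l) v)))"
    by (rule right_rec[OF L L])
  also have "\<dots> = (\<Sum>p\<in>{1..N}. C (Suc n) (int l) (int p) (rho (int p) (int l) v) - C (Suc n) (int l) (- int p) (rho (- int p) (int l) v))"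
    unfolding sum_qI
  proof (rule sum.cong[OF refl])
    fix p assume p: "p \<in> {1..N}"
    then show "C (Suc n) (int l) (int p) (smul (sgnI (int p)) (rho (int p) (int l) v)) +
         C (Suc n) (int l) (- int p) (smul (sgnI (- int p)) (rho (- int p) (int l) v)) =
         C (Suc n) (int l) (int p) (rho (int p) (int l) v) - C (Suc n) (int l) (- int p) (rho (- int p) (int l) v)"
      using mem_p[OF p] L by (simp add: sgnI_alt C_minus)
  qed
  also have "\<dots> = (smul (lam (int l)) (C (Suc n) (int l) (int l) v) - C (Suc n) (int l) (- int l) (rho (- int l) (int l) v))
     + (\<Sum>p\<in>{l<..N}. - (C (Suc n) (int p) (int p) v + C (Suc n) (- int p) (- int p) v))"
  proof (rule sum_split_l[OF l])
    fix p assume p: "p \<in> {1..N}"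
    have P: "int p \<in> qI N" and nP: "- int p \<in> qI N" using mem_p[OF p] by auto
    consider "p < l" | "p = l" | "l < p" by linarith
    then show "C (Suc n) (int l) (int p) (rho (int p) (int l) v) - C (Suc n) (int l) (- int p) (rho (- int p) (int l) v) =
      (if p = l then smul (lam (int l)) (C (Suc n) (int l) (int l) v) - C (Suc n) (int l) (- int l) (rho (- int l) (int l) v) else 0) +
      (if l < p then - (C (Suc n) (int p) (int p) v + C (Suc n) (- int p) (- int p) v) else 0)"
    proof cases
      case 1
      then have "rho (int p) (int l) v = 0" "rho (- int p) (int l) v = 0"
        using hz[OF P L] hz[OF nP L] by auto
      then show ?thesis using 1 L P nP by simp
    next
      case 2
      then show ?thesis using hd[of "int l"] l L by (simp add: C_scale)
    next
      case 3
      have a: "C (Suc n) (int l) (int p) (rho (int p) (int l) v) = C (Suc n) (int l) (int l) v - C (Suc n) (int p) (int p) v"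
        using hlp1[OF L P] 3 l by (simp add: sg_def pbar_def)
      have b: "C (Suc n) (int l) (- int p) (rho (- int p) (int l) v) = C (Suc n) (int l) (int l) v + C (Suc n) (- int p) (- int p) v"
        using hlp1[OF L nP] 3 l by (simp add: sg_def pbar_def)
      show ?thesis using 3 by (simp add: a b)
    qed
  qed
  finally show ?thesis by (simp only: sum_negf) simp
qed

lemma R2:
  assumes l: "l \<in> {1..N}"
  shows "C (Suc (Suc n)) (int l) (- int l) v = C (Suc n) (int l) (int l) (rho (- int l) (int l) v)
     - smul (lam (int l)) (C (Suc n) (int l) (- int l) v)
     + (\<Sum>p\<in>{l<..N}. C (Suc n) (int p) (- int p) v - C (Suc n) (- int p) (int p) v)"
proof -
  have L: "int l \<in> qI N" and nL: "- int l \<in> qI N" using mem_p[OF l] by auto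
  have "C (Suc (Suc n)) (int l) (- int l) v = (\<Sum>m\<in>qI N. C (Suc n) (int l) m (smul (sgnI m) (rho m (- int l) v)))"
    by (rule right_rec[OF L nL])
  also have "\<dots> = (\<Sum>p\<in>{1..N}. C (Suc n) (int l) (int p) (rho (int p) (- int l) v) - C (Suc n) (int l) (- int p) (rho (- int p) (- int l) v))"
    unfolding sum_qI
  proof (rule sum.cong[OF refl])
    fix p assume p: "p \<in> {1..N}"
    then show "C (Suc n) (int l) (int p) (smul (sgnI (int p)) (rho (int p) (- int l) v)) +
         C (Suc n) (int l) (- int p) (smul (sgnI (- int p)) (rho (- int p) (- int l) v)) =
         C (Suc n) (int l) (int p) (rho (int p) (- int l) v) - C (Suc n) (int l) (- int p) (rho (- int p) (- int l) v)"
      using mem_p[OF p] L by (simp add: sgnI_alt C_minus)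
  qed
  also have "\<dots> = (C (Suc n) (int l) (int l) (rho (- int l) (int l) v) - smul (lam (int l)) (C (Suc n) (int l) (- int l) v))
     + (\<Sum>p\<in>{l<..N}. C (Suc n) (int p) (- int p) v - C (Suc n) (- int p) (int p) v)"
  proof (rule sum_split_l[OF l])
    fix p assume p: "p \<in> {1..N}"
    have P: "int p \<in> qI N" and nP: "- int p \<in> qI N" using mem_p[OF p] by auto
    consider "p < l" | "p = l" | "l < p" by linarith
    then show "C (Suc n) (int l) (int p) (rho (int p) (- int l) v) - C (Suc n) (int l) (- int p) (rho (- int p) (- int l) v) =
      (if p = l then C (Suc n) (int l) (int l) (rho (- int l) (int l) v) - smul (lam (int l)) (C (Suc n) (int l) (- int l) v) else 0) +
      (if l < p then C (Suc n) (int p) (- int p) v - C (Suc n) (- int p) (int p) v else 0)"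
    proof cases
      case 1
      then have "rho (int p) (- int l) v = 0" "rho (- int p) (- int l) v = 0"
        using hz[OF P nL] hz[OF nP nL] by auto
      then show ?thesis using 1 L P nP by simp
    next
      case 2
      have r1: "rho (int l) (- int l) = rho (- int l) (int l)" using rsym[OF nL L] by simp
      have r2: "rho (- int l) (- int l) = rho (int l) (int l)" using rsym[OF L L] by simp
      show ?thesis using 2 hd[of "int l"] l L nL by (simp add: C_scale r1 r2)
    next
      case 3
      have a: "C (Suc n) (int l) (int p) (rho (int p) (- int l) v) = C (Suc n) (int l) (- int l) v - C (Suc n) (- int p) (int p) v"
        using hlp2[OF L P] 3 l by (simp add: sg_def pbar_def)
      have b: "C (Suc n) (int l) (- int p) (rho (- int p) (- int l) v) = C (Suc n) (int l) (- int l) v - C (Suc n) (int p) (- int p) v"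
        using hlp2[OF L nP] 3 l by (simp add: sg_def pbar_def)
      show ?thesis using 3 by (simp add: a b)
    qed
  qed
  finally show ?thesis by simp
qed


lemma E2:
  assumes l: "l \<in> {1..N}"
  shows "rho (- int l) (int l) (rho (- int l) (int l) v) = smul (lam (int l)) v"
proof -
  have L: "int l \<in> qI N" and nL: "- int l \<in> qI N" using mem_p[OF l] by auto
  have r1: "rho (int l) (- int l) = rho (- int l) (int l)" using rsym[OF nL L] by simp
  have r2: "rho (- int l) (- int l) = rho (int l) (int l)" using rsym[OF L L] by simp
  have sv: "sg (int l) (- int l) (int l) (- int l) = -1" using l by (simp add: sg_def pbar_def)
  have "rho (int l) (- int l) (rho (int l) (- int l) v) - smul (sg (int l) (- int l) (int l) (- int l)) (rho (int l) (- int l) (rho (int l) (- int l) v)) =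
          (if int l = - int l then rho (int l) (- int l) v else 0)
          - smul (sg (int l) (- int l) (int l) (- int l)) (if int l = - int l then rho (int l) (- int l) v else 0)
          + (if int l = - (- int l) then rho (- int l) (- int l) v else 0)
          - smul (sg (int l) (- int l) (int l) (- int l)) (if - int l = - int l then rho (int l) (- (- int l)) v else 0)"
    by (rule rcomm[OF L nL L nL])
  then have "rho (- int l) (int l) (rho (- int l) (int l) v) + rho (- int l) (int l) (rho (- int l) (int l) v)
     = smul (lam (int l)) v + smul (lam (int l)) v"
    using l hd[of "int l"] by (simp add: r1 r2 sv)
  then have "smul 2 (rho (- int l) (int l) (rho (- int l) (int l) v)) = smul 2 (smul (lam (int l)) v)"
    using scale_left_distrib[of 1 1] by (metis one_add_one scale_one)
  then show ?thesis using scale_cancel_left[of 2 "rho (- int l) (int l) (rho (- int l) (int l) v)" "smul (lam (int l)) v"] by simp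
qed

lemma CLmLe:
  assumes l: "l \<in> {1..N}"
  shows "C n (int l) (- int l) (rho (- int l) (int l) v) = C n (- int l) (- int l) v + C n (int l) (int l) v - rho (- int l) (int l) (C n (int l) (- int l) v)"
proof -
  have L: "int l \<in> qI N" and nL: "- int l \<in> qI N" using mem_p[OF l] by auto
  have sv: "sg (- int l) (int l) (int l) (- int l) = -1" using l by (simp add: sg_def pbar_def)
  have "rho (- int l) (int l) (C n (int l) (- int l) v) - smul (sg (- int l) (int l) (int l) (- int l)) (C n (int l) (- int l) (rho (- int l) (int l) v)) =
   (if int l = int l then C n (- int l) (- int l) v else 0) - smul (sg (- int l) (int l) (int l) (- int l)) (if - int l = - int l then C n (int l) (int l) v else 0)
   + (if int l = - int l then C n (- (- int l)) (- int l) v else 0) - smul (sg (- int l) (int l) (int l) (- int l)) (if - (- int l) = - int l then C n (int l) (- int l) v else 0)"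
    by (rule comm_C[OF nL L L nL])
  then show ?thesis using l by (simp add: sv algebra_simps)
qed

lemma CLLe:
  assumes l: "l \<in> {1..N}"
  shows "C n (int l) (int l) (rho (- int l) (int l) v) = rho (- int l) (int l) (C n (int l) (int l) v) + C n (int l) (- int l) v - C n (- int l) (int l) v"
proof -
  have L: "int l \<in> qI N" and nL: "- int l \<in> qI N" using mem_p[OF l] by auto
  have r1: "rho (int l) (- int l) = rho (- int l) (int l)" using rsym[OF nL L] by simp
  have sv: "sg (int l) (- int l) (int l) (int l) = 1" using l by (simp add: sg_def pbar_def)
  have "rho (int l) (- int l) (C n (int l) (int l) v) - smul (sg (int l) (- int l) (int l) (int l)) (C n (int l) (int l) (rho (int l) (- int l) v)) =
   (if int l = - int l then C n (int l) (int l) v else 0) - smul (sg (int l) (- int l) (int l) (int l)) (if int l = int l then C n (int l) (- int l) v else 0)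
   + (if int l = - (- int l) then C n (- int l) (int l) v else 0) - smul (sg (int l) (- int l) (int l) (int l)) (if - int l = int l then C n (int l) (- (- int l)) v else 0)"
    by (rule comm_C[OF L nL L L])
  then show ?thesis using l by (simp add: sv r1 algebra_simps)
qed

lemma inv_main:
  "\<forall>l\<in>{1..N}. C (Suc (2*m)) (int l) (int l) v = smul (lam (int l) * bs N lam m l) v \<and>
      C (Suc (2*m)) (int l) (- int l) v = smul (bs N lam m l) (rho (- int l) (int l) v)"
proof (induction m)
  case 0
  show ?case
  proof
    fix l assume l: "l \<in> {1..N}"
    have "rho (int l) (- int l) = rho (- int l) (int l)" using rsym[OF mem_p(2)[OF l] mem_p(1)[OF l]] by simp
    then show "C (Suc (2 * 0)) (int l) (int l) v = smul (lam (int l) * bs N lam 0 l) v \<and>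
      C (Suc (2 * 0)) (int l) (- int l) v = smul (bs N lam 0 l) (rho (- int l) (int l) v)"
      using hd[of "int l"] l by simp
  qed
next
  case (Suc m)
  define n where "n = 2 * m"
  define b where "b = bs N lam m"
  define b' where "b' = bs N lam (Suc m)"
  define e where "e l = rho (- int l) (int l) v" for l
  have IH1: "C (Suc n) (int p) (int p) v = smul (lam (int p) * b p) v" if "p \<in> {1..N}" for p
    using Suc.IH that unfolding n_def b_def by blast
  have IH2: "C (Suc n) (int p) (- int p) v = smul (b p) (e p)" if "p \<in> {1..N}" for p
    using Suc.IH that unfolding n_def b_def e_def by blast
  have ev: "(-1::complex) ^ n = 1" unfolding n_def by simp
  have S1: "C (Suc n) (- int p) (- int p) v = C (Suc n) (int p) (int p) v" if "p \<in> {1..N}" for p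
    using sym_C_Suc[OF mem_p(1)[OF that] mem_p(1)[OF that]] ev by simp
  have S2: "C (Suc n) (- int p) (int p) v = C (Suc n) (int p) (- int p) v" if "p \<in> {1..N}" for p
    using sym_C_Suc[OF mem_p(1)[OF that] mem_p(2)[OF that]] ev by simp
  have Q1: "C (Suc (Suc n)) (int l) (int l) v = smul (b' l) v" if l: "l \<in> {1..N}" for l
  proof -
    have L: "int l \<in> qI N" and nL: "- int l \<in> qI N" using mem_p[OF l] by auto
    have ce: "C (Suc n) (int l) (- int l) (e l) = smul (lam (int l) * b l) v"
    proof -
      have r: "rho (- int l) (int l) (C (Suc n) (int l) (- int l) v) = smul (b l * lam (int l)) v"
        unfolding IH2[OF l] rscale[OF nL L] e_def E2[OF l] scale_scale ..
      have bc: "b l * lam (int l) = lam (int l) * b l" by (rule mult.commute)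
      show ?thesis unfolding e_def by (simp only: CLmLe[OF l] IH1[OF l] S1[OF l] r bc) simp
    qed
    have cs: "(\<Sum>p\<in>{l<..N}. C (Suc n) (int p) (int p) v + C (Suc n) (- int p) (- int p) v)
        = smul (\<Sum>p\<in>{l<..N}. 2 * (lam (int p) * b p)) v"
    proof -
      have "(\<Sum>p\<in>{l<..N}. C (Suc n) (int p) (int p) v + C (Suc n) (- int p) (- int p) v)
         = (\<Sum>p\<in>{l<..N}. smul (2 * (lam (int p) * b p)) v)"
      proof (rule sum.cong[OF refl])
        fix p assume "p \<in> {l<..N}"
        then have p: "p \<in> {1..N}" using l by auto
        show "C (Suc n) (int p) (int p) v + C (Suc n) (- int p) (- int p) v = smul (2 * (lam (int p) * b p)) v"
          by (simp only: S1[OF p] IH1[OF p] scale_left_distrib[symmetric] mult_2[symmetric])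
      qed
      then show ?thesis by (simp add: scale_sum_left)
    qed
    have "C (Suc (Suc n)) (int l) (int l) v = smul (lam (int l)) (smul (lam (int l) * b l) v)
       - smul (lam (int l) * b l) v - smul (\<Sum>p\<in>{l<..N}. 2 * (lam (int p) * b p)) v"
      using R1[OF l, of n] unfolding e_def[symmetric] by (simp only: IH1[OF l] ce cs)
    also have "\<dots> = smul (lam (int l) * (lam (int l) * b l) - (lam (int l) * b l) - (\<Sum>p\<in>{l<..N}. 2 * (lam (int p) * b p))) v"
      by (simp only: scale_left_diff_distrib scale_scale)
    also have "lam (int l) * (lam (int l) * b l) - (lam (int l) * b l) - (\<Sum>p\<in>{l<..N}. 2 * (lam (int p) * b p)) = b' l"
    proof -
      have "(\<Sum>p\<in>{l<..N}. 2 * (lam (int p) * b p)) = 2 * (\<Sum>p\<in>{l<..N}. lam (int p) * b p)"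
        by (rule sum_distrib_left[symmetric])
      then show ?thesis unfolding b'_def b_def by (simp add: algebra_simps)
    qed
    finally show ?thesis .
  qed
  have Q2: "C (Suc (Suc n)) (int l) (- int l) v = 0" if l: "l \<in> {1..N}" for l
  proof -
    have L: "int l \<in> qI N" and nL: "- int l \<in> qI N" using mem_p[OF l] by auto
    have ce: "C (Suc n) (int l) (int l) (e l) = smul (lam (int l) * b l) (e l)"
      using CLLe[OF l, of "Suc n"] IH1[OF l] IH2[OF l] S2[OF l]
      by (simp add: e_def rscale[OF nL L])
    have cs: "(\<Sum>p\<in>{l<..N}. C (Suc n) (int p) (- int p) v - C (Suc n) (- int p) (int p) v) = 0"
      by (rule sum.neutral) (use S2 l in auto)
    show ?thesis using R2[OF l, of n] ce cs IH2[OF l] unfolding e_def by (simp add: mult.commute)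
  qed
  have od: "(-1::complex) ^ Suc n = -1" unfolding n_def by simp
  have T1: "C (Suc (Suc n)) (- int p) (- int p) v = - C (Suc (Suc n)) (int p) (int p) v" if "p \<in> {1..N}" for p
    using sym_C_Suc[OF mem_p(1)[OF that] mem_p(1)[OF that], of "Suc n"] od by simp
  have T2: "C (Suc (Suc n)) (- int p) (int p) v = 0" if "p \<in> {1..N}" for p
    using sym_C_Suc[OF mem_p(1)[OF that] mem_p(2)[OF that], of "Suc n"] od Q2[OF that] by simp
  have eq: "Suc (2 * Suc m) = Suc (Suc (Suc n))" unfolding n_def by simp
  show ?case unfolding eq
  proof (intro ballI conjI)
    fix l assume l: "l \<in> {1..N}"
    have L: "int l \<in> qI N" and nL: "- int l \<in> qI N" using mem_p[OF l] by auto
    have ce: "C (Suc (Suc n)) (int l) (- int l) (e l) = 0"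
      using CLmLe[OF l, of "Suc (Suc n)"] Q2[OF l] T1[OF l] nL L unfolding e_def by simp
    have cs: "(\<Sum>p\<in>{l<..N}. C (Suc (Suc n)) (int p) (int p) v + C (Suc (Suc n)) (- int p) (- int p) v) = 0"
      by (rule sum.neutral) (use T1 l in auto)
    show "C (Suc (Suc (Suc n))) (int l) (int l) v = smul (lam (int l) * bs N lam (Suc m) l) v"
      using R1[OF l, of "Suc n"] ce cs Q1[OF l] unfolding e_def b'_def by simp
    have ce2: "C (Suc (Suc n)) (int l) (int l) (e l) = smul (b' l) (e l)"
      using CLLe[OF l, of "Suc (Suc n)"] Q1[OF l] Q2[OF l] T2[OF l] nL L
      by (simp add: e_def rscale[OF nL L])
    have cs2: "(\<Sum>p\<in>{l<..N}. C (Suc (Suc n)) (int p) (- int p) v - C (Suc (Suc n)) (- int p) (int p) v) = 0"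
      by (rule sum.neutral) (use T2 Q2 l in auto)
    show "C (Suc (Suc (Suc n))) (int l) (- int l) v = smul (bs N lam (Suc m) l) (rho (- int l) (int l) v)"
      using R2[OF l, of "Suc n"] ce2 cs2 Q2[OF l] L nL unfolding e_def b'_def by simp
  qed
qed

end


lemma pow_Suc_left: "A \<in> carrier_mat n n \<Longrightarrow> A ^\<^sub>m Suc k = A * A ^\<^sub>m k"
proof (induction k)
  case 0
  then show ?case by simp
next
  case (Suc k)
  have "A ^\<^sub>m Suc (Suc k) = (A * A ^\<^sub>m k) * A" using Suc by simp
  also have "\<dots> = A * (A ^\<^sub>m k * A)" using Suc.prems by (simp add: assoc_mult_mat[of _ n n _ n _ n])
  finally show ?case by simp
qed

lemma Amat_entry: "a < N \<Longrightarrow> t < N \<Longrightarrow> Amat N lam $$ (a,t) =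
  (if t = a then lam (int a + 1) * (lam (int a + 1) - 1) else if a < t then -2 * lam (int a + 1) else 0)"
  unfolding Amat_def by (simp add: Let_def)

lemma Amat_carrier: "Amat N lam \<in> carrier_mat N N" unfolding Amat_def by simp

lemma mat_main: "a < N \<Longrightarrow> (\<Sum>j<N. (Amat N lam ^\<^sub>m m) $$ (a, j) * lam (int j + 1)) = lam (int a + 1) * bs N lam m (Suc a)"
proof (induction m arbitrary: a)
  case 0
  have "dim_row (Amat N lam) = N" using Amat_carrier by auto
  then have "(\<Sum>j<N. (Amat N lam ^\<^sub>m 0) $$ (a, j) * lam (int j + 1)) = (\<Sum>j<N. if j = a then lam (int j + 1) else 0)"
    using 0 by (intro sum.cong refl) simp
  also have "\<dots> = lam (int a + 1)" using 0 by (subst sum.delta) auto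
  finally show ?case by simp
next
  case (Suc m)
  define A where "A = Amat N lam"
  have A: "A \<in> carrier_mat N N" unfolding A_def by (rule Amat_carrier)
  have "(\<Sum>j<N. (A ^\<^sub>m Suc m) $$ (a, j) * lam (int j + 1)) = (\<Sum>j<N. (\<Sum>t<N. A $$ (a,t) * (A ^\<^sub>m m) $$ (t,j)) * lam (int j + 1))"
  proof (rule sum.cong[OF refl])
    fix j assume j: "j \<in> {..<N}"
    have "(A ^\<^sub>m Suc m) $$ (a, j) = row A a \<bullet> col (A ^\<^sub>m m) j"
      unfolding pow_Suc_left[OF A] using A j Suc.prems by simp
    also have "\<dots> = (\<Sum>t<N. A $$ (a,t) * (A ^\<^sub>m m) $$ (t,j))"
      unfolding scalar_prod_def using A j Suc.prems by (simp add: atLeast0LessThan)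
    finally show "(A ^\<^sub>m Suc m) $$ (a, j) * lam (int j + 1) = (\<Sum>t<N. A $$ (a,t) * (A ^\<^sub>m m) $$ (t,j)) * lam (int j + 1)" by simp
  qed
  also have "\<dots> = (\<Sum>t<N. A $$ (a,t) * (\<Sum>j<N. (A ^\<^sub>m m) $$ (t,j) * lam (int j + 1)))"
  proof -
    have "(\<Sum>j<N. (\<Sum>t<N. A $$ (a,t) * (A ^\<^sub>m m) $$ (t,j)) * lam (int j + 1))
        = (\<Sum>j<N. \<Sum>t<N. A $$ (a,t) * ((A ^\<^sub>m m) $$ (t,j) * lam (int j + 1)))"
      by (simp add: sum_distrib_right mult.assoc)
    also have "\<dots> = (\<Sum>t<N. \<Sum>j<N. A $$ (a,t) * ((A ^\<^sub>m m) $$ (t,j) * lam (int j + 1)))"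
      by (rule sum.swap)
    also have "\<dots> = (\<Sum>t<N. A $$ (a,t) * (\<Sum>j<N. (A ^\<^sub>m m) $$ (t,j) * lam (int j + 1)))"
      by (simp add: sum_distrib_left)
    finally show ?thesis .
  qed
  also have "\<dots> = (\<Sum>t<N. A $$ (a,t) * (lam (int t + 1) * bs N lam m (Suc t)))"
    using Suc.IH unfolding A_def by simp
  also have "\<dots> = (\<Sum>t<N. (if t = a then lam (int a + 1) * (lam (int a + 1) - 1) * (lam (int a + 1) * bs N lam m (Suc a)) else 0)
        + (if a < t then -2 * lam (int a + 1) * (lam (int t + 1) * bs N lam m (Suc t)) else 0))"
    by (rule sum.cong[OF refl]) (use Suc.prems in \<open>auto simp: A_def Amat_entry\<close>)
  also have "\<dots> = lam (int a + 1) * (lam (int a + 1) - 1) * (lam (int a + 1) * bs N lam m (Suc a))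
       + (\<Sum>t\<in>{t\<in>{..<N}. a < t}. -2 * lam (int a + 1) * (lam (int t + 1) * bs N lam m (Suc t)))"
    using Suc.prems sum.inter_filter[of "{..<N}" "\<lambda>t. -2 * lam (int a + 1) * (lam (int t + 1) * bs N lam m (Suc t))" "\<lambda>t. a < t"]
    by (simp add: sum.distrib)
  also have "(\<Sum>t\<in>{t\<in>{..<N}. a < t}. -2 * lam (int a + 1) * (lam (int t + 1) * bs N lam m (Suc t)))
     = (\<Sum>p\<in>{Suc a<..N}. -2 * lam (int a + 1) * (lam (int p) * bs N lam m p))"
  proof -
    have "{Suc a<..N} = Suc ` {t\<in>{..<N}. a < t}"
    proof (intro equalityI subsetI)
      fix x assume "x \<in> {Suc a<..N}"
      then show "x \<in> Suc ` {t\<in>{..<N}. a < t}" by (intro image_eqI[of _ _ "x - 1"]) auto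
    qed auto
    then show ?thesis by (simp add: sum.reindex add.commute)
  qed
  also have "lam (int a + 1) * (lam (int a + 1) - 1) * (lam (int a + 1) * bs N lam m (Suc a))
       + (\<Sum>p\<in>{Suc a<..N}. -2 * lam (int a + 1) * (lam (int p) * bs N lam m p)) = lam (int a + 1) * bs N lam (Suc m) (Suc a)"
  proof -
    have h: "(\<Sum>p\<in>{Suc a<..N}. -2 * lam (int a + 1) * (lam (int p) * bs N lam m p)) = -2 * lam (int a + 1) * (\<Sum>p\<in>{Suc a<..N}. lam (int p) * bs N lam m p)"
      by (rule sum_distrib_left[symmetric])
    show ?thesis by (simp only: h) (simp add: algebra_simps)
  qed
  finally show ?case unfolding A_def .
qed


theorem mainTheorem10:
  fixes N :: nat
    and smul :: "complex \<Rightarrow> 'v::ab_group_add \<Rightarrow> 'v"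
    and rho :: "int \<Rightarrow> int \<Rightarrow> 'v \<Rightarrow> 'v"
    and v :: 'v
    and lam :: "int \<Rightarrow> complex"
  assumes "N \<ge> 1"
    and "is_qN_rep N smul rho"
    and "\<And>i j. i \<in> qI N \<Longrightarrow> j \<in> qI N \<Longrightarrow> \<bar>i\<bar> < \<bar>j\<bar> \<Longrightarrow> rho i j v = 0"
    and "\<And>i. i \<in> {1 .. int N} \<Longrightarrow> rho i i v = smul (lam i) v"
  shows "\<forall>m::nat. \<forall>i\<in>{1 .. N}.
           Cact N smul rho (2 * m + 1) (int i) (int i) v =
           smul (\<Sum>j\<in>{1 .. N}. (Amat N lam ^\<^sub>m m) $$ (i - 1, j - 1) * lam (int j)) v"
proof -
  from assms(2) have vs: "vector_space smul"
    and lin: "\<forall>i\<in>qI N. \<forall>j\<in>qI N. Vector_Spaces.linear smul smul (rho i j)"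
    and sy: "\<forall>i\<in>qI N. \<forall>j\<in>qI N. rho (-i) (-j) = rho i j"
    and cm: "\<forall>i\<in>qI N. \<forall>j\<in>qI N. \<forall>k\<in>qI N. \<forall>l\<in>qI N. \<forall>w.
        let s = ((-1::complex) ^ ((pbar i + pbar j) * (pbar k + pbar l))) in
        rho i j (rho k l w) - smul s (rho k l (rho i j w)) =
          (if k = j then rho i l w else 0)
          - smul s (if i = l then rho k j w else 0)
          + (if k = - j then rho (- i) l w else 0)
          - smul s (if - i = l then rho k (- j) w else 0)"
    unfolding is_qN_rep_def by auto
  have la: "rho i j (x + y) = rho i j x + rho i j y" if "i \<in> qI N" "j \<in> qI N" for i j x y
    using lin that unfolding Vector_Spaces.linear_iff by blast
  have ls: "rho i j (smul c x) = smul c (rho i j x)" if "i \<in> qI N" "j \<in> qI N" for i j c x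
    using lin that unfolding Vector_Spaces.linear_iff by blast
  have q: "qrep smul N rho"
    unfolding qrep_def qrep_axioms_def
    using vs la ls sy cm by (auto simp: sg_def Let_def)
  have qs: "qsing smul N rho v lam"
    unfolding qsing_def qsing_axioms_def using q assms(3,4) by auto
  interpret qs: qsing smul N rho v lam by (rule qs)
  show ?thesis
  proof (intro allI ballI)
    fix m i assume i: "i \<in> {1..N}"
    have c: "Cact N smul rho (2*m+1) (int i) (int i) v = smul (lam (int i) * bs N lam m i) v"
      using qs.inv_main[of m] i by simp
    have "(\<Sum>j\<in>{1..N}. (Amat N lam ^\<^sub>m m) $$ (i - 1, j - 1) * lam (int j))
        = (\<Sum>j<N. (Amat N lam ^\<^sub>m m) $$ (i - 1, j) * lam (int j + 1))"
      by (simp add: sum.atLeast1_atMost_eq add.commute)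
    also have "\<dots> = lam (int (i - 1) + 1) * bs N lam m (Suc (i - 1))"
      by (rule mat_main) (use i in auto)
    also have "\<dots> = lam (int i) * bs N lam m i" using i by (simp add: of_nat_diff)
    finally show "Cact N smul rho (2 * m + 1) (int i) (int i) v =
           smul (\<Sum>j\<in>{1 .. N}. (Amat N lam ^\<^sub>m m) $$ (i - 1, j - 1) * lam (int j)) v"
      using c by simp
  qed
qed

end
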